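(* Let $N$ and $L$ be integers with $1\le L\le N-1$, and let $\hat\alpha>0$, $\hat\delta_1>0$, $\hat\delta_2>0$ with $\hat\delta_1\neq\hat\delta_2$. Let $z,y_1,y_2$ be independent random variables with $z\sim\mathrm{Gamma}(N-L,1)$ and $y_1,y_2\sim\mathrm{Gamma}(L,1)$, and set $$X=\frac{\hat\alpha z}{\hat\delta_1y_1+\hat\delta_2y_2}.$$ Then $$\mathbb{E}\left[\ln(1+X)\right]=\sum_{i=0}^{N-L-1}\sum_{j=1}^2\sum_{k=0}^{L-1}\frac{a^{(j)}_k\hat{\alpha}^{k+1}(k+i)!}{i!}\,I_2\!\left(\frac{\hat{\alpha}}{\hat{\delta}_j},i,k+i+1\right),$$ where, for $0\le i\le L-1$, $$a^{(1)}_i=\frac{1}{\hat\delta_1^{i+1}(L-1)!}\left(\frac{\hat\delta_1}{\hat\delta_1-\hat\delta_2}\right)^L\frac{(2(L-1)-i)!}{i!(L-1-i)!}\left(\frac{\hat\delta_2}{\hat\delta_2-\hat\delta_1}\right)^{L-1-i},$$ $$a^{(2)}_i=\frac{1}{\hat\delta_2^{i+1}(L-1)!}\left(\frac{\hat\delta_2}{\hat\delta_2-\hat\delta_1}\right)^L\frac{(2(L-1)-i)!}{i!(L-1-i)!}\left(\frac{\hat\delta_1}{\hat\delta_1-\hat\delta_2}\right)^{L-1-i}.$$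
   Context: $\mathrm{Gamma}(n,1)$ denotes the distribution with density $t^{n-1}e^{-t}/(n-1)!$ on $t>0$ (its CDF is $1-e^{-t}\sum_{i=0}^{n-1}t^i/i!$). For $a>0$ and nonnegative integers $m,n$ with $n\ge m+1$, define $$I_2(a,m,n)=\int_0^\infty\frac{x^m}{(x+a)^n(x+1)}\,dx.$$ In the paper this models the high-SNR (interference-limited) SINR of a zero-forcing user with quantization and delay. *)

theory Defs
  imports "HOL-Probability.Probability"
begin

definition I2 :: "real \<Rightarrow> nat \<Rightarrow> nat \<Rightarrow> real" where
  "I2 a m n = (LBINT x:{0<..}. x ^ m / ((x + a) ^ n * (x + 1)))"

text \<open>Partial-fraction coefficient: a^(1)_i = acoef L d1 d2 i and a^(2)_i = acoef L d2 d1 i.\<close>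
definition acoef :: "nat \<Rightarrow> real \<Rightarrow> real \<Rightarrow> nat \<Rightarrow> real" where
  "acoef L d1 d2 i =
     1 / (d1 ^ (i + 1) * fact (L - 1)) * (d1 / (d1 - d2)) ^ L
     * (fact (2 * (L - 1) - i) / (fact i * fact (L - 1 - i)))
     * (d2 / (d2 - d1)) ^ (L - 1 - i)"

definition dsel :: "nat \<Rightarrow> real \<Rightarrow> real \<Rightarrow> real" where
  "dsel j d1 d2 = (if j = 1 then d1 else d2)"

end

theory Submission
  imports Defs "HOL-Real_Asymp.Real_Asymp"
begin

lemma alt_choose_sum: "(\<Sum>t\<le>n. (-1)^t * real (n choose t)) = (if n = 0 then 1 else 0)"
  using choose_alternating_sum[of n, where 'a=real] by auto

lemma comb1:
  fixes m s :: nat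
  shows "(\<Sum>r\<le>m. (-1)^r * real (m choose r) * real (r choose s)) = (if s = m then (-1)^m else 0)"
proof (cases "s \<le> m")
  case False
  then show ?thesis by (auto intro!: sum.neutral)
next
  case True
  have "(\<Sum>r\<le>m. (-1)^r * real (m choose r) * real (r choose s))
      = (\<Sum>r\<in>{s..m}. (-1)^r * real (m choose r) * real (r choose s))"
    by (rule sum.mono_neutral_right) auto
  also have "\<dots> = (\<Sum>r\<in>{s..m}. (-1)^r * (real (m choose s) * real ((m - s) choose (r - s))))"
  proof (rule sum.cong)
    fix r assume "r \<in> {s..m}"
    then have "(m choose r) * (r choose s) = (m choose s) * ((m - s) choose (r - s))"
      by (intro choose_mult) auto
    then have "real (m choose r) * real (r choose s) = real (m choose s) * real ((m - s) choose (r - s))"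
      by (metis of_nat_mult)
    then show "(-1)^r * real (m choose r) * real (r choose s) = (-1)^r * (real (m choose s) * real ((m - s) choose (r - s)))"
      by simp
  qed simp
  also have "\<dots> = (\<Sum>t\<le>m - s. (-1)^(t + s) * (real (m choose s) * real ((m - s) choose t)))"
  proof -
    have e: "{s..m} = (\<lambda>t. t + s) ` {..m - s}" using True
      by (auto simp: image_iff) (rule_tac x="x - s" in bexI, auto)
    have i: "inj_on (\<lambda>t. t + s) {..m - s}" by (auto simp: inj_on_def)
    show ?thesis unfolding e sum.reindex[OF i] o_def
      by (intro sum.cong refl) simp
  qed
  also have "\<dots> = (-1)^s * real (m choose s) * (\<Sum>t\<le>m - s. (-1)^t * real ((m - s) choose t))"
    unfolding sum_distrib_left by (intro sum.cong refl) (simp add: power_add)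
  also have "\<dots> = (if s = m then (-1)^m else 0)"
    using True by (simp add: alt_choose_sum)
  finally show ?thesis .
qed

lemma comb2:
  fixes m j :: nat
  shows "(\<Sum>r\<le>m. (-1)^r * real (m choose r) * real ((m + r) choose j)) =
         (if j < m then 0 else (-1)^m * real (m choose (j - m)))"
proof -
  have "(\<Sum>r\<le>m. (-1)^r * real (m choose r) * real ((m + r) choose j)) =
      (\<Sum>r\<le>m. (-1)^r * real (m choose r) * (\<Sum>s\<le>j. real (r choose s) * real (m choose (j - s))))"
  proof (intro sum.cong refl)
    fix r
    have "real ((m + r) choose j) = real ((r + m) choose j)" by (simp add: add.commute)
    also have "\<dots> = real (\<Sum>s\<le>j. (r choose s) * (m choose (j - s)))" by (simp only: vandermonde)
    also have "\<dots> = (\<Sum>s\<le>j. real (r choose s) * real (m choose (j - s)))" by simp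
    finally show "(-1)^r * real (m choose r) * real ((m + r) choose j) =
      (-1)^r * real (m choose r) * (\<Sum>s\<le>j. real (r choose s) * real (m choose (j - s)))" by simp
  qed
  also have "\<dots> = (\<Sum>s\<le>j. real (m choose (j - s)) * (\<Sum>r\<le>m. (-1)^r * real (m choose r) * real (r choose s)))"
    unfolding sum_distrib_left sum_distrib_right
    by (subst sum.swap) (intro sum.cong refl, simp add: mult_ac)
  also have "\<dots> = (\<Sum>s\<le>j. if s = m then real (m choose (j - s)) * (-1)^m else 0)"
    by (intro sum.cong refl) (simp add: comb1)
  also have "\<dots> = (if j < m then 0 else (-1)^m * real (m choose (j - m)))"
    by (auto simp: sum.delta)
  finally show ?thesis .
qed


definition Qs :: "nat \<Rightarrow> real \<Rightarrow> real" where
  "Qs n v = (\<Sum>l\<le>n. v ^ l / fact l)"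

lemma star_inner:
  fixes m r :: nat and v :: real
  assumes "r \<le> m"
  shows "fact (m + r) * v ^ (m - r) * Qs (m + r) v =
         (\<Sum>i\<le>2*m. fact i * real ((m + r) choose i) * v ^ (2*m - i))"
proof -
  let ?n = "m + r"
  have "fact ?n * v ^ (m - r) * Qs ?n v = (\<Sum>l\<le>?n. fact ?n / fact l * v ^ (m - r + l))"
    unfolding Qs_def sum_distrib_left by (intro sum.cong refl) (simp add: power_add)
  also have "\<dots> = (\<Sum>i\<le>?n. fact ?n / fact (?n - i) * v ^ (2*m - i))"
    by (rule sum.reindex_bij_witness[where i="\<lambda>i. ?n - i" and j="\<lambda>i. ?n - i"])
       (use assms in \<open>auto simp: mult_2\<close>)
  also have "\<dots> = (\<Sum>i\<le>?n. fact i * real (?n choose i) * v ^ (2*m - i))"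
    by (intro sum.cong refl) (simp add: binomial_fact)
  also have "\<dots> = (\<Sum>i\<le>2*m. fact i * real (?n choose i) * v ^ (2*m - i))"
    using assms by (intro sum.mono_neutral_left) auto
  finally show ?thesis .
qed

lemma star_identity:
  fixes m :: nat and v :: real
  shows "(\<Sum>r\<le>m. real (m choose r) * (-1)^r * fact (m + r) * v ^ (m - r) * Qs (m + r) v) =
         (-1)^m * (\<Sum>k\<le>m. real (m choose k) * fact (2*m - k) * v ^ k)"
proof -
  have "(\<Sum>r\<le>m. real (m choose r) * (-1)^r * fact (m + r) * v ^ (m - r) * Qs (m + r) v) =
      (\<Sum>r\<le>m. real (m choose r) * (-1)^r * (\<Sum>i\<le>2*m. fact i * real ((m + r) choose i) * v ^ (2*m - i)))"
    by (intro sum.cong refl, subst star_inner[symmetric]) (simp_all add: mult.assoc)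
  also have "\<dots> = (\<Sum>i\<le>2*m. fact i * v ^ (2*m - i) * (\<Sum>r\<le>m. (-1)^r * real (m choose r) * real ((m + r) choose i)))"
    unfolding sum_distrib_left
    by (subst sum.swap) (intro sum.cong refl, simp add: mult_ac)
  also have "\<dots> = (\<Sum>i\<le>2*m. if i < m then 0 else fact i * v ^ (2*m - i) * ((-1)^m * real (m choose (i - m))))"
    by (intro sum.cong refl) (simp add: comb2)
  also have "\<dots> = (\<Sum>i\<in>{m..2*m}. fact i * v ^ (2*m - i) * ((-1)^m * real (m choose (i - m))))"
    by (subst sum.mono_neutral_right[of "{..2*m}" "{m..2*m}"]) auto
  also have "\<dots> = (\<Sum>k\<le>m. fact (2*m - k) * v ^ k * ((-1)^m * real (m choose k)))"
  proof (rule sum.reindex_bij_witness[where i="\<lambda>k. 2*m - k" and j="\<lambda>i. 2*m - i"])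
    fix i assume i: "i \<in> {m..2*m}"
    then have "m choose (i - m) = m choose (m - (i - m))"
      by (intro binomial_symmetric) auto
    moreover have "m - (i - m) = 2*m - i" using i by auto
    ultimately have e: "m choose (2*m - i) = m choose (i - m)" by simp
    show "fact (2*m - (2*m - i)) * v ^ (2*m - i) * ((-1)^m * real (m choose (2*m - i))) =
          fact i * v ^ (2*m - i) * ((-1)^m * real (m choose (i - m)))"
      using i e by simp
  qed auto
  also have "\<dots> = (-1)^m * (\<Sum>k\<le>m. real (m choose k) * fact (2*m - k) * v ^ k)"
    unfolding sum_distrib_left by (intro sum.cong refl) (simp add: mult_ac)
  finally show ?thesis .
qed


definition Pn :: "real \<Rightarrow> nat \<Rightarrow> real \<Rightarrow> real" where
  "Pn c n y = - exp (-c*y) * fact n / c^(n+1) * Qs n (c*y)"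

lemma Qs_0[simp]: "Qs n 0 = 1"
  unfolding Qs_def by (induction n) auto

lemma Qs_Suc: "Qs (Suc n) v = Qs n v + v^(Suc n) / fact (Suc n)"
  unfolding Qs_def by simp

lemma Pn_0: "c \<noteq> 0 \<Longrightarrow> Pn c 0 y = - exp (-c*y) / c"
  unfolding Pn_def Qs_def by simp

lemma Pn_Suc:
  assumes "c \<noteq> 0"
  shows "Pn c (Suc n) y = - exp (-c*y) * y^(Suc n) / c + real (Suc n) / c * Pn c n y"
  unfolding Pn_def Qs_Suc using assms
  by (simp add: field_simps power_mult_distrib del: fact_Suc of_nat_Suc)
     (simp add: field_simps)

lemma Pn_deriv:
  assumes c: "c \<noteq> 0"
  shows "DERIV (Pn c n) y :> y^n * exp (-c*y)"
proof (induction n arbitrary: y)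
  case 0
  have e: "Pn c 0 = (\<lambda>y. - exp (-c*y) / c)" using c by (simp add: Pn_0 fun_eq_iff)
  show ?case unfolding e
    using c by (auto intro!: derivative_eq_intros simp: field_simps)
next
  case (Suc n)
  have e: "Pn c (Suc n) = (\<lambda>y. - exp (-c*y) * y^(Suc n) / c + real (Suc n) / c * Pn c n y)"
    using c by (simp add: Pn_Suc fun_eq_iff)
  show ?case unfolding e
    using c by (auto intro!: derivative_eq_intros Suc.IH simp: field_simps) (cases n, auto)
qed

lemma Pn_at0: "c \<noteq> 0 \<Longrightarrow> Pn c n 0 = - fact n / c^(n+1)"
  unfolding Pn_def by simp


lemma lhs_form:
  fixes p q D A B C F s :: real and N n :: nat
  assumes "p \<noteq> 0" "q \<noteq> 0" "D \<noteq> 0" "A \<noteq> 0" "B \<noteq> 0" "C \<noteq> 0"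
  shows "(1/p)^N * (1/q)^N / A^2 * (A/(B*C)) * s * F / (D/(p*q))^(N+n) = s*F*(p*q)^n/(A*B*C*D^(N+n))"
proof -
  have 1: "(1/p)^N * (1/q)^N = 1/(p*q)^N" by (simp add: power_mult_distrib power_one_over)
  have 2: "(D/(p*q))^(N+n) = D^(N+n)/((p*q)^N*(p*q)^n)" by (simp add: power_divide power_add)
  show ?thesis unfolding 2 mult.assoc[symmetric] 1 using assms
    by (simp add: field_simps power2_eq_square)
qed

lemma rhs_form:
  fixes p q D A B C F s :: real and k n :: nat
  assumes "p \<noteq> 0" "q \<noteq> 0" "D \<noteq> 0" "A \<noteq> 0" "B \<noteq> 0" "C \<noteq> 0"
  shows "1 / (p^(k+1) * A) * (p/D)^(k+n+1) * (F / (B*C)) * (q / - D)^n = (-1)^n*F*(p*q)^n/(A*B*C*D^(k+n+1+n))"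
proof -
  have 1: "(p/D)^(k+n+1) = p^(k+1)*p^n / D^(k+n+1)" by (simp add: power_divide power_add mult_ac)
  have 2: "(q / - D)^n = (-1)^n * q^n / D^n"
  proof -
    have "q / - D = (-1)*(q/D)" by simp
    then have "(q / -D)^n = (-1)^n * (q/D)^n" by (simp only: power_mult_distrib)
    then show ?thesis by (simp add: power_divide)
  qed
  show ?thesis unfolding 1 2 using assms
    by (simp add: field_simps power_add power_mult_distrib)
qed

lemma acoef_form:
  fixes p q :: real and k n :: nat
  assumes p: "p > 0" and q: "q > 0" and pq: "p \<noteq> q"
  shows "acoef (Suc (k+n)) p q k = (-1)^n * fact (k+2*n) * (p*q)^n /
           (fact (k+n) * fact k * fact n * (p - q)^(k+n+1+n))"
proof -
  have e1: "2 * (Suc (k+n) - 1) - k = k + 2*n" by simp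
  have e2: "Suc (k+n) - 1 - k = n" by simp
  have e3: "Suc (k+n) - 1 = k + n" by simp
  have e4: "2 * (k+n) - k = k + 2*n" by simp
  have e5: "k + n - k = n" by simp
  have qp: "q - p = - (p - q)" by simp
  show ?thesis
    unfolding acoef_def e1 e2 e3 e4 e5 qp unfolding Suc_eq_plus1
    by (rule rhs_form) (use p q pq in auto)
qed

lemma coefA:
  fixes p q :: real and k n :: nat
  assumes p: "p > 0" and q: "q > 0" and pq: "p \<noteq> q"
  shows "(1/p)^(Suc (k+n)) * (1/q)^(Suc (k+n)) / (fact (k+n))^2 * real ((k+n) choose k) * (-1)^n
           * fact (k + 2*n) / (1/q - 1/p)^(k + 2*n + 1)
         = acoef (Suc (k+n)) p q k"
proof -
  have c: "1/q - 1/p = (p - q) / (p*q)" using p q by (simp add: field_simps)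
  have b: "real ((k+n) choose k) = fact (k+n) / (fact k * fact n)"
    by (simp add: binomial_fact)
  have e: "k + 2*n + 1 = Suc (k+n) + n" by simp
  have "(1/p)^(Suc (k+n)) * (1/q)^(Suc (k+n)) / (fact (k+n))^2 * real ((k+n) choose k) * (-1)^n
           * fact (k + 2*n) / (1/q - 1/p)^(k + 2*n + 1) =
         (-1)^n * fact (k + 2*n) * (p*q)^n / (fact (k+n) * fact k * fact n * (p-q)^(Suc (k+n) + n))"
    unfolding c b e
    apply (rule lhs_form[where p=p and q=q and D="p-q" and A="fact(k+n)" and B="fact k" and C="fact n" and s="(-1)^n" and F="fact(k+2*n)" and N="Suc(k+n)" and n=n])
    using p q pq by simp_all
  also have "\<dots> = acoef (Suc (k+n)) p q k"
    unfolding acoef_form[OF assms] by simp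
  finally show ?thesis .
qed

lemma coefB:
  fixes p q :: real and k n :: nat
  assumes p: "p > 0" and q: "q > 0" and pq: "p \<noteq> q"
  shows "- ((1/p)^(Suc (k+n)) * (1/q)^(Suc (k+n)) / (fact (k+n))^2 * real ((k+n) choose k) * (-1)^(k+n)
           * fact (k + 2*n) / (1/q - 1/p)^(k + 2*n + 1))
         = acoef (Suc (k+n)) q p k"
proof -
  have c: "1/q - 1/p = (p - q) / (p*q)" using p q by (simp add: field_simps)
  have b: "real ((k+n) choose k) = fact (k+n) / (fact k * fact n)"
    by (simp add: binomial_fact)
  have e: "k + 2*n + 1 = Suc (k+n) + n" by simp
  have L: "(1/p)^(Suc (k+n)) * (1/q)^(Suc (k+n)) / (fact (k+n))^2 * real ((k+n) choose k) * (-1)^(k+n)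
           * fact (k + 2*n) / (1/q - 1/p)^(k + 2*n + 1) =
         (-1)^(k+n) * fact (k + 2*n) * (p*q)^n / (fact (k+n) * fact k * fact n * (p-q)^(Suc (k+n) + n))"
    unfolding c b e
    apply (rule lhs_form[where p=p and q=q and D="p-q" and A="fact(k+n)" and B="fact k" and C="fact n" and s="(-1)^(k+n)" and F="fact(k+2*n)" and N="Suc(k+n)" and n=n])
    using p q pq by simp_all
  have qp: "(q - p)^(k+n+1+n) = (-1)^(k+n+1+n) * (p - q)^(k+n+1+n)"
  proof -
    have "q - p = (-1)*(p-q)" by simp
    then show ?thesis by (simp only: power_mult_distrib)
  qed
  have s: "(-1::real)^(k+n+1+n) = - ((-1)^k)"
  proof -
    have "k+n+1+n = k + 1 + 2*n" by simp
    then show ?thesis by (simp add: power_add power_mult)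
  qed
  have ex: "Suc (k+n) + n = k+n+1+n" by simp
  define X where "X = (p - q)^(k+n+1+n)"
  define Z where "Z = (fact (k+n) * fact k * fact n :: real)"
  define F where "F = (fact (k + 2*n) :: real)"
  define P where "P = (p*q)^n"
  have X: "X \<noteq> 0" using pq unfolding X_def by simp
  have Z: "Z \<noteq> 0" unfolding Z_def by simp
  have R: "acoef (Suc (k+n)) q p k = (-1)^n * F * P / (Z * (-((-1)^k) * X))"
    unfolding acoef_form[OF q p pq[symmetric]] qp s X_def Z_def F_def P_def
    by (simp add: mult_ac)
  have LL: "- ((1/p)^(Suc (k+n)) * (1/q)^(Suc (k+n)) / (fact (k+n))^2 * real ((k+n) choose k) * (-1)^(k+n)
           * fact (k + 2*n) / (1/q - 1/p)^(k + 2*n + 1)) = - ((-1)^k * ((-1)^n * F * P / (Z * X)))"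
    unfolding L ex X_def Z_def F_def P_def by (simp add: power_add mult_ac)
  have sgn: "(-1::real)^k = 1 \<or> (-1::real)^k = -1"
    by (cases "even k") auto
  from sgn show ?thesis
  proof
    assume h: "(-1::real)^k = 1" show ?thesis unfolding LL R h by simp
  next
    assume h: "(-1::real)^k = -1" show ?thesis unfolding LL R h by simp
  qed
qed


definition Kc :: "nat \<Rightarrow> real \<Rightarrow> real \<Rightarrow> real" where
  "Kc m a b = a^(Suc m) * b^(Suc m) / (fact m)^2"

definition Gc :: "nat \<Rightarrow> real \<Rightarrow> real \<Rightarrow> real \<Rightarrow> real \<Rightarrow> real" where
  "Gc m a b x y = Kc m a b * exp (-a*x) *
     (\<Sum>r\<le>m. real (m choose r) * x^(m-r) * (-1)^r * Pn (b - a) (m+r) y)"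

lemma binom_xy: "(x - y::real)^m * y^m = (\<Sum>r\<le>m. real (m choose r) * x^(m-r) * (-1)^r * y^(m+r))"
proof -
  have "(x - y)^m = (-y + x)^m" by simp
  also have "\<dots> = (\<Sum>r\<le>m. real (m choose r) * (-y)^r * x^(m-r))" by (rule binomial_ring)
  finally have "(x - y)^m * y^m = (\<Sum>r\<le>m. real (m choose r) * (-y)^r * x^(m-r)) * y^m" by simp
  also have "\<dots> = (\<Sum>r\<le>m. real (m choose r) * x^(m-r) * (-1)^r * y^(m+r))"
    unfolding sum_distrib_right
  proof (intro sum.cong refl)
    fix r
    have h1: "(-y)^r = (-1)^r * y^r" by (rule power_minus)
    have h2: "y^(m+r) = y^m * y^r" by (rule power_add)
    show "real (m choose r) * (-y)^r * x^(m-r) * y^m = real (m choose r) * x^(m-r) * (-1)^r * y^(m+r)"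
      unfolding h1 h2 by (simp only: ac_simps)
  qed
  finally show ?thesis .
qed

lemma Gc_deriv:
  assumes ab: "a \<noteq> b"
  shows "DERIV (Gc m a b x) y :> Kc m a b * ((x-y)^m * exp (-a*(x-y)) * (y^m * exp (-b*y)))"
proof -
  have c: "b - a \<noteq> 0" using ab by simp
  have D: "DERIV (Gc m a b x) y :> Kc m a b * exp (-a*x) *
     (\<Sum>r\<le>m. real (m choose r) * x^(m-r) * (-1)^r * (y^(m+r) * exp (-(b-a)*y)))"
    unfolding Gc_def
    by (intro DERIV_cmult DERIV_sum DERIV_cmult Pn_deriv c)
  have E: "Kc m a b * exp (-a*x) *
     (\<Sum>r\<le>m. real (m choose r) * x^(m-r) * (-1)^r * (y^(m+r) * exp (-(b-a)*y))) =
     Kc m a b * ((x-y)^m * exp (-a*(x-y)) * (y^m * exp (-b*y)))"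
  proof -
    have "(\<Sum>r\<le>m. real (m choose r) * x^(m-r) * (-1)^r * (y^(m+r) * exp (-(b-a)*y))) =
        (\<Sum>r\<le>m. real (m choose r) * x^(m-r) * (-1)^r * y^(m+r)) * exp (-(b-a)*y)"
      unfolding sum_distrib_right by (intro sum.cong refl) (simp add: mult_ac)
    also have "\<dots> = (x - y)^m * y^m * exp (-(b-a)*y)" by (simp add: binom_xy)
    finally have 1: "(\<Sum>r\<le>m. real (m choose r) * x^(m-r) * (-1)^r * (y^(m+r) * exp (-(b-a)*y))) =
        (x - y)^m * y^m * exp (-(b-a)*y)" .
    have 2: "exp (-a*x) * exp (-(b-a)*y) = exp (-a*(x-y)) * exp (-b*y)"
      by (simp add: exp_add[symmetric] algebra_simps)
    show ?thesis unfolding 1 using 2 by (simp add: mult_ac)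
  qed
  show ?thesis by (rule DERIV_cong[OF D E])
qed

lemma S1_eq:
  fixes c x :: real
  shows "(\<Sum>r\<le>m. real (m choose r) * x^(m-r) * (-1)^r * (fact (m+r) / c^(m+r+1))) =
         (\<Sum>k\<le>m. real (m choose k) * (-1)^(m-k) * fact (2*m-k) / c^(2*m-k+1) * x^k)"
proof (rule sum.reindex_bij_witness[where i="\<lambda>k. m - k" and j="\<lambda>r. m - r"])
  fix r assume r: "r \<in> {..m}"
  then have "m choose (m - r) = m choose r" using binomial_symmetric[of r m] by simp
  moreover have "m - (m - r) = r" "2*m - (m - r) = m + r" using r by auto
  ultimately show "real (m choose (m - r)) * (-1)^(m - (m - r)) * fact (2*m - (m - r)) / c^(2*m - (m - r) + 1) * x^(m - r) =
    real (m choose r) * x^(m-r) * (-1)^r * (fact (m+r) / c^(m+r+1))"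
    by simp
qed auto

lemma S2_eq:
  fixes c x :: real
  assumes c: "c \<noteq> 0"
  shows "(\<Sum>r\<le>m. real (m choose r) * x^(m-r) * (-1)^r * (fact (m+r) / c^(m+r+1) * Qs (m+r) (c*x))) =
         (-1)^m / c^(2*m+1) * (\<Sum>k\<le>m. real (m choose k) * fact (2*m-k) * (c*x)^k)"
proof -
  have "(\<Sum>r\<le>m. real (m choose r) * x^(m-r) * (-1)^r * (fact (m+r) / c^(m+r+1) * Qs (m+r) (c*x))) =
      (\<Sum>r\<le>m. 1 / c^(2*m+1) * (real (m choose r) * (-1)^r * fact (m + r) * (c*x) ^ (m - r) * Qs (m + r) (c*x)))"
  proof (intro sum.cong refl)
    fix r assume r: "r \<in> {..m}"
    then have "2*m+1 = (m-r)+(m+r+1)" by simp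
    then have e: "c^(2*m+1) = c^(m-r) * c^(m+r+1)"
      by (metis power_add)
    show "real (m choose r) * x^(m-r) * (-1)^r * (fact (m+r) / c^(m+r+1) * Qs (m+r) (c*x)) =
      1 / c^(2*m+1) * (real (m choose r) * (-1)^r * fact (m + r) * (c*x) ^ (m - r) * Qs (m + r) (c*x))"
      unfolding e using c by (simp add: power_mult_distrib field_simps)
  qed
  also have "\<dots> = 1 / c^(2*m+1) * (\<Sum>r\<le>m. real (m choose r) * (-1)^r * fact (m + r) * (c*x) ^ (m - r) * Qs (m + r) (c*x))"
    by (simp add: sum_distrib_left)
  also have "\<dots> = (-1)^m / c^(2*m+1) * (\<Sum>k\<le>m. real (m choose k) * fact (2*m-k) * (c*x)^k)"
    by (simp add: star_identity)
  finally show ?thesis .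
qed


lemma coefA':
  fixes p q :: real and k m :: nat
  assumes p: "p > 0" and q: "q > 0" and pq: "p \<noteq> q" and km: "k \<le> m"
  shows "Kc m (1/p) (1/q) * real (m choose k) * (-1)^(m-k) * fact (2*m-k) / (1/q - 1/p)^(2*m-k+1)
       = acoef (Suc m) p q k"
proof -
  obtain n where m: "m = k + n" using km by (metis le_add_diff_inverse)
  have e1: "m - k = n" "2*m - k = k + 2*n" "2*m-k+1 = k+2*n+1" using m by auto
  show ?thesis unfolding e1 unfolding m Kc_def using coefA[OF p q pq, of k n] by simp
qed

lemma coefB':
  fixes p q :: real and k m :: nat
  assumes p: "p > 0" and q: "q > 0" and pq: "p \<noteq> q" and km: "k \<le> m"
  shows "Kc m (1/p) (1/q) * ((-1)^m / (1/q - 1/p)^(2*m+1) * (real (m choose k) * fact (2*m-k) * (1/q - 1/p)^k))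
       = - acoef (Suc m) q p k"
proof -
  obtain n where m: "m = k + n" using km by (metis le_add_diff_inverse)
  define c where "c = 1/q - 1/p"
  have c0: "c \<noteq> 0" using p q pq unfolding c_def by (auto simp: field_simps)
  have e1: "2*m - k = k + 2*n" using m by auto
  have e2: "c^(2*m+1) = c^(k+2*n+1) * c^k" using m by (simp add: power_add[symmetric])
  have "Kc m (1/p) (1/q) * ((-1)^m / c^(2*m+1) * (real (m choose k) * fact (2*m-k) * c^k))
      = Kc m (1/p) (1/q) * real (m choose k) * (-1)^m * fact (2*m-k) / c^(k+2*n+1)"
    unfolding e2 using c0 by (simp add: field_simps)
  also have "\<dots> = - acoef (Suc m) q p k"
    using coefB[OF p q pq, of k n] unfolding m Kc_def e1 c_def[symmetric] by simp
  finally show ?thesis unfolding c_def .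
qed

lemma conv_algebra:
  fixes d1 d2 x :: real
  assumes d1: "d1 > 0" and d2: "d2 > 0" and d12: "d1 \<noteq> d2"
  shows "Gc m (1/d1) (1/d2) x x - Gc m (1/d1) (1/d2) x 0 =
    (\<Sum>k\<le>m. acoef (Suc m) d1 d2 k * x^k * exp (-x/d1)) + (\<Sum>k\<le>m. acoef (Suc m) d2 d1 k * x^k * exp (-x/d2))"
proof -
  define a where "a = 1/d1"
  define b where "b = 1/d2"
  define c where "c = b - a"
  have c0: "c \<noteq> 0" using d1 d2 d12 unfolding c_def a_def b_def by (auto simp: field_simps)
  define K where "K = Kc m a b"
  define S1 where "S1 = (\<Sum>r\<le>m. real (m choose r) * x^(m-r) * (-1)^r * (fact (m+r) / c^(m+r+1)))"
  define S2 where "S2 = (\<Sum>r\<le>m. real (m choose r) * x^(m-r) * (-1)^r * (fact (m+r) / c^(m+r+1) * Qs (m+r) (c*x)))"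
  have P: "Pn c n x - Pn c n 0 = fact n / c^(n+1) - exp (-c*x) * (fact n / c^(n+1) * Qs n (c*x))" for n
    unfolding Pn_at0[OF c0] unfolding Pn_def by simp
  have "Gc m a b x x - Gc m a b x 0 = K * exp (-a*x) *
      (\<Sum>r\<le>m. real (m choose r) * x^(m-r) * (-1)^r * (Pn c (m+r) x - Pn c (m+r) 0))"
    unfolding Gc_def K_def c_def[symmetric] right_diff_distrib[symmetric] sum_subtractf[symmetric] ..
  also have "\<dots> = K * exp (-a*x) * (S1 - exp (-c*x) * S2)"
    unfolding P S1_def S2_def sum_distrib_left sum_subtractf[symmetric]
    by (intro arg_cong[where f="\<lambda>t. K * exp (-a*x) * t"] sum.cong refl) (simp add: algebra_simps)
  also have "\<dots> = (\<Sum>k\<le>m. acoef (Suc m) d1 d2 k * x^k * exp (-x/d1)) +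
       (\<Sum>k\<le>m. acoef (Suc m) d2 d1 k * x^k * exp (-x/d2))"
  proof -
    have A: "K * exp (-a*x) * S1 = (\<Sum>k\<le>m. acoef (Suc m) d1 d2 k * x^k * exp (-x/d1))"
    proof -
      have "K * exp (-a*x) * S1 = (\<Sum>k\<le>m. (K * real (m choose k) * (-1)^(m-k) * fact (2*m-k) / c^(2*m-k+1)) * x^k * exp (-a*x))"
        unfolding S1_def S1_eq sum_distrib_left sum_distrib_right
        by (intro sum.cong refl) (simp add: mult_ac)
      also have "\<dots> = (\<Sum>k\<le>m. acoef (Suc m) d1 d2 k * x^k * exp (-x/d1))"
      proof (intro sum.cong refl)
        fix k assume "k \<in> {..m}"
        then have "K * real (m choose k) * (-1)^(m-k) * fact (2*m-k) / c^(2*m-k+1) = acoef (Suc m) d1 d2 k"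
          using coefA'[OF d1 d2 d12, of k m] unfolding K_def c_def a_def b_def by simp
        moreover have "exp (-a*x) = exp (-x/d1)" unfolding a_def by simp
        ultimately show "(K * real (m choose k) * (-1)^(m-k) * fact (2*m-k) / c^(2*m-k+1)) * x^k * exp (-a*x)
          = acoef (Suc m) d1 d2 k * x^k * exp (-x/d1)" by simp
      qed
      finally show ?thesis .
    qed
    have B: "K * exp (-a*x) * (exp (-c*x) * S2) = - (\<Sum>k\<le>m. acoef (Suc m) d2 d1 k * x^k * exp (-x/d2))"
    proof -
      have eb: "exp (-a*x) * exp (-c*x) = exp (-x/d2)"
        unfolding c_def b_def a_def by (simp add: exp_add[symmetric] algebra_simps)
      have "K * exp (-a*x) * (exp (-c*x) * S2) = (\<Sum>k\<le>m. (K * ((-1)^m / c^(2*m+1) * (real (m choose k) * fact (2*m-k) * c^k))) * x^k * exp (-x/d2))"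
        unfolding S2_def S2_eq[OF c0] sum_distrib_left sum_distrib_right eb[symmetric]
        by (intro sum.cong refl) (simp add: power_mult_distrib mult_ac)
      also have "\<dots> = (\<Sum>k\<le>m. (- acoef (Suc m) d2 d1 k) * x^k * exp (-x/d2))"
      proof (intro sum.cong refl)
        fix k assume "k \<in> {..m}"
        then show "(K * ((-1)^m / c^(2*m+1) * (real (m choose k) * fact (2*m-k) * c^k))) * x^k * exp (-x/d2)
          = (- acoef (Suc m) d2 d1 k) * x^k * exp (-x/d2)"
          using coefB'[OF d1 d2 d12, of k m] unfolding K_def c_def a_def b_def by simp
      qed
      also have "\<dots> = - (\<Sum>k\<le>m. acoef (Suc m) d2 d1 k * x^k * exp (-x/d2))"
        by (simp add: sum_negf[symmetric])
      finally show ?thesis .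
    qed
    show ?thesis using A B by (simp add: right_diff_distrib mult.assoc)
  qed
  finally show ?thesis unfolding a_def b_def .
qed


definition hW :: "nat \<Rightarrow> real \<Rightarrow> real \<Rightarrow> real \<Rightarrow> real" where
  "hW L d1 d2 x = (\<Sum>j\<in>{1::nat, 2}. \<Sum>k = 0..L - 1.
      acoef L (dsel j d1 d2) (dsel j d2 d1) k * (fact k * dsel j d1 d2 ^ (k + 1))
      * erlang_density k (1 / dsel j d1 d2) x)"

lemma hW_measurable[measurable]: "hW L d1 d2 \<in> borel_measurable borel"
  unfolding hW_def by measurable

lemma hW_neg: "x < 0 \<Longrightarrow> hW L d1 d2 x = 0"
  unfolding hW_def erlang_density_def by simp

lemma erl_form:
  assumes "d > 0" "x \<ge> 0"
  shows "fact k * d ^ (k + 1) * erlang_density k (1 / d) x = x^k * exp (-x/d)"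
  using assms unfolding erlang_density_def by (simp add: field_simps power_divide)

lemma hW_pos_form:
  assumes d1: "d1 > 0" and d2: "d2 > 0" and x: "x \<ge> 0"
  shows "hW (Suc m) d1 d2 x = (\<Sum>k\<le>m. acoef (Suc m) d1 d2 k * x^k * exp (-x/d1)) +
                              (\<Sum>k\<le>m. acoef (Suc m) d2 d1 k * x^k * exp (-x/d2))"
proof -
  have "hW (Suc m) d1 d2 x = (\<Sum>k\<le>m. acoef (Suc m) d1 d2 k * (fact k * d1 ^ (k + 1) * erlang_density k (1 / d1) x)) +
     (\<Sum>k\<le>m. acoef (Suc m) d2 d1 k * (fact k * d2 ^ (k + 1) * erlang_density k (1 / d2) x))"
    unfolding hW_def by (simp add: dsel_def atLeast0AtMost mult.assoc)
  also have "\<dots> = (\<Sum>k\<le>m. acoef (Suc m) d1 d2 k * x^k * exp (-x/d1)) +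
                              (\<Sum>k\<le>m. acoef (Suc m) d2 d1 k * x^k * exp (-x/d2))"
    by (simp only: erl_form[OF d1 x, unfolded mult.assoc] erl_form[OF d2 x, unfolded mult.assoc] mult.assoc)
  finally show ?thesis .
qed

lemma conv_density:
  fixes d1 d2 x :: real
  assumes d1: "d1 > 0" and d2: "d2 > 0" and d12: "d1 \<noteq> d2" and x: "x > 0"
  shows "(\<integral>\<^sup>+y. ennreal (erlang_density m (1/d1) (x - y)) * ennreal (erlang_density m (1/d2) y) \<partial>lborel)
           = ennreal (hW (Suc m) d1 d2 x)"
    and "hW (Suc m) d1 d2 x \<ge> 0"
proof -
  define a where "a = 1/d1"
  define b where "b = 1/d2"
  have a: "a > 0" and b: "b > 0" using d1 d2 by (auto simp: a_def b_def)
  have ab: "a \<noteq> b" using d12 d1 d2 by (auto simp: a_def b_def)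
  define f where "f y = Kc m a b * ((x-y)^m * exp (-a*(x-y)) * (y^m * exp (-b*y)))" for y
  have fnn: "0 \<le> f y" if "y \<in> {0..x}" for y
    using that a b unfolding f_def Kc_def by (auto intro!: mult_nonneg_nonneg)
  have fm[measurable]: "f \<in> borel_measurable borel" unfolding f_def by measurable
  have D: "DERIV (Gc m a b x) y :> f y" for y unfolding f_def by (rule Gc_deriv[OF ab])
  have eq: "ennreal (erlang_density m a (x - y)) * ennreal (erlang_density m b y) = ennreal (f y) * indicator {0..x} y" for y
  proof (cases "y \<in> {0..x}")
    case True
    then have "erlang_density m a (x - y) * erlang_density m b y = f y"
      unfolding erlang_density_def f_def Kc_def by (auto simp: field_simps power2_eq_square)
    then show ?thesis using True a b by (simp add: ennreal_mult[symmetric])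
  next
    case False
    then have "y < 0 \<or> x - y < 0" by auto
    then show ?thesis using False unfolding erlang_density_def by auto
  qed
  have "(\<integral>\<^sup>+y. ennreal (erlang_density m a (x - y)) * ennreal (erlang_density m b y) \<partial>lborel)
      = (\<integral>\<^sup>+y. ennreal (f y) * indicator {0..x} y \<partial>lborel)" by (simp add: eq)
  also have "\<dots> = ennreal (Gc m a b x x - Gc m a b x 0)"
    by (rule nn_integral_FTC_Icc[OF fm D fnn]) (use x in auto)
  also have "Gc m a b x x - Gc m a b x 0 = hW (Suc m) d1 d2 x"
    unfolding a_def b_def conv_algebra[OF d1 d2 d12] hW_pos_form[OF d1 d2 less_imp_le[OF x]] ..
  finally show "(\<integral>\<^sup>+y. ennreal (erlang_density m (1/d1) (x - y)) * ennreal (erlang_density m (1/d2) y) \<partial>lborel)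
           = ennreal (hW (Suc m) d1 d2 x)" unfolding a_def b_def .
  have "(\<integral>y. f y * indicator {0..x} y \<partial>lborel) = Gc m a b x x - Gc m a b x 0"
    by (rule integral_FTC_Icc_nonneg[OF fm D fnn]) (use x in auto)
  moreover have "0 \<le> (\<integral>y. f y * indicator {0..x} y \<partial>lborel)"
    by (rule Bochner_Integration.integral_nonneg) (auto simp: fnn split: split_indicator)
  ultimately have "0 \<le> Gc m a b x x - Gc m a b x 0" by simp
  then show "hW (Suc m) d1 d2 x \<ge> 0"
    unfolding a_def b_def conv_algebra[OF d1 d2 d12] hW_pos_form[OF d1 d2 less_imp_le[OF x]] .
qed


definition Qr :: "nat \<Rightarrow> real \<Rightarrow> real" where
  "Qr n s = (\<Sum>i\<le>n. s^i * exp (-s) / fact i)"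

lemma Qr_nonneg: "s \<ge> 0 \<Longrightarrow> Qr n s \<ge> 0"
  unfolding Qr_def by (intro sum_nonneg) auto

lemma Qr_measurable[measurable]: "Qr n \<in> borel_measurable borel"
  unfolding Qr_def by measurable

lemma erl_has_int:
  assumes "l > 0"
  shows "has_bochner_integral lborel (erlang_density k l) 1"
proof (rule has_bochner_integral_nn_integral)
  show "(\<integral>\<^sup>+x. ennreal (erlang_density k l x) \<partial>lborel) = ennreal 1"
    using nn_integral_erlang_ith_moment[OF assms, of k 0] by simp
qed (use assms in auto)

lemma erl_nn1: "l > 0 \<Longrightarrow> (\<integral>\<^sup>+x. ennreal (erlang_density k l x) \<partial>lborel) = 1"
  using nn_integral_erlang_ith_moment[of l k 0] by simp

lemma tail_erlang:
  assumes s: "s \<ge> 0"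
  shows "(\<integral>\<^sup>+x. ennreal (erlang_density n 1 x) * indicator {s..} x \<partial>lborel) = ennreal (Qr n s)"
proof -
  let ?f = "\<lambda>x. ennreal (erlang_density n 1 x)"
  have 1: "(\<integral>\<^sup>+x. ?f x \<partial>lborel) = (\<integral>\<^sup>+x. ?f x * indicator {..s} x \<partial>lborel) + (\<integral>\<^sup>+x. ?f x * indicator {s<..} x \<partial>lborel)"
    by (subst nn_integral_add[symmetric]) (auto intro!: nn_integral_cong simp: split: split_indicator)
  have cdf: "(\<integral>\<^sup>+x. ?f x * indicator {..s} x \<partial>lborel) = ennreal (1 - Qr n s)"
    using nn_integral_erlang_density[of 1 n s] s unfolding erlang_CDF_def Qr_def by simp
  have 2: "(\<integral>\<^sup>+x. ?f x * indicator {s<..} x \<partial>lborel) = (\<integral>\<^sup>+x. ?f x * indicator {s..} x \<partial>lborel)"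
    by (intro nn_integral_cong_AE) (use AE_lborel_singleton[of s] in \<open>auto split: split_indicator\<close>)
  have Q1: "Qr n s \<le> 1"
    using erlang_CDF_nonneg[of 1 n s] s unfolding erlang_CDF_def Qr_def by simp
  have e: "1 = ennreal (1 - Qr n s) + (\<integral>\<^sup>+x. ?f x * indicator {s..} x \<partial>lborel)"
    using 1 erl_nn1[of 1 n] unfolding cdf 2 by simp
  have "(\<integral>\<^sup>+x. ?f x * indicator {s..} x \<partial>lborel) =
     (ennreal (1 - Qr n s) + (\<integral>\<^sup>+x. ?f x * indicator {s..} x \<partial>lborel)) - ennreal (1 - Qr n s)"
    by (rule ennreal_add_diff_cancel_left[symmetric]) simp
  also have "\<dots> = 1 - ennreal (1 - Qr n s)" using e by simp
  finally have "(\<integral>\<^sup>+x. ?f x * indicator {s..} x \<partial>lborel) = 1 - ennreal (1 - Qr n s)" .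
  also have "\<dots> = ennreal (Qr n s)"
    using Q1 Qr_nonneg[OF s] by (simp add: ennreal_minus ennreal_1[symmetric] del: ennreal_1)
  finally show ?thesis .
qed

lemma ln_layer:
  assumes v: "v \<ge> 0"
  shows "ennreal (ln (1 + v)) = (\<integral>\<^sup>+t. ennreal (1 / (1 + t)) * indicator {0..v} t \<partial>lborel)"
proof -
  have "(\<integral>\<^sup>+t. ennreal (1 / (1 + t)) * indicator {0..v} t \<partial>lborel) = ennreal (ln (1 + v) - ln (1 + 0))"
    by (rule nn_integral_FTC_Icc) (auto intro!: derivative_eq_intros simp: v)
  then show ?thesis by simp
qed

definition cQ :: "nat \<Rightarrow> real \<Rightarrow> real \<Rightarrow> nat \<Rightarrow> real" where
  "cQ k l s i = s^i / fact i * l^(k+1) * fact (k+i) / (fact k * (l+s)^(k+i+1))"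

lemma term_eq:
  fixes l s w :: real
  assumes ls: "l + s > 0"
  shows "l ^ Suc k * w ^ k * exp (- l * w) / fact k * ((s * w) ^ i * exp (- (s * w)) / fact i) =
      s ^ i / fact i * l ^ (k + 1) * fact (k + i) / (fact k * (l + s) ^ (k + i + 1)) *
      ((l + s) ^ Suc (k + i) * w ^ (k + i) * exp (- (l + s) * w) / fact (k + i))"
proof -
  define u where "u = l + s"
  have u: "u > 0" using ls unfolding u_def .
  have ex': "exp (- u * w) = exp (- l * w) * exp (- (s * w))" unfolding u_def by (simp add: exp_add[symmetric] algebra_simps)
  show ?thesis unfolding u_def[symmetric] ex'
    using u by (simp add: field_simps power_add power_mult_distrib)
qed

lemma erl_Qr_pointwise:
  assumes l: "l > 0" and s: "s \<ge> 0"
  shows "erlang_density k l w * Qr n (s*w) = (\<Sum>i\<le>n. cQ k l s i * erlang_density (k+i) (l+s) w)"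
proof (cases "w < 0")
  case True then show ?thesis unfolding erlang_density_def by simp
next
  case False
  have ls: "l + s > 0" using l s by simp
  have e1: "erlang_density k l w = l ^ Suc k * w ^ k * exp (- l * w) / fact k"
    using False by (simp add: erlang_density_def)
  have e2: "erlang_density (k+i) (l+s) w = (l + s) ^ Suc (k + i) * w ^ (k + i) * exp (- (l + s) * w) / fact (k + i)" for i
    using False by (simp add: erlang_density_def)
  show ?thesis unfolding e1 e2 Qr_def cQ_def sum_distrib_left
    by (intro sum.cong refl term_eq ls)
qed

lemma erl_Qr_int:
  assumes l: "l > 0" and s: "s \<ge> 0"
  shows "has_bochner_integral lborel (\<lambda>w. erlang_density k l w * Qr n (s*w)) (\<Sum>i\<le>n. cQ k l s i)"
proof -
  have "has_bochner_integral lborel (\<lambda>w. \<Sum>i\<le>n. cQ k l s i * erlang_density (k+i) (l+s) w) (\<Sum>i\<le>n. cQ k l s i * 1)"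
    by (intro has_bochner_integral_sum has_bochner_integral_mult_right erl_has_int) (use l s in auto)
  then show ?thesis by (simp add: erl_Qr_pointwise[OF l s])
qed

definition Ghw :: "nat \<Rightarrow> real \<Rightarrow> real \<Rightarrow> nat \<Rightarrow> real \<Rightarrow> real" where
  "Ghw L d1 d2 n s = (\<Sum>j\<in>{1::nat, 2}. \<Sum>k = 0..L - 1.
      acoef L (dsel j d1 d2) (dsel j d2 d1) k * (fact k * dsel j d1 d2 ^ (k + 1))
      * (\<Sum>i\<le>n. cQ k (1 / dsel j d1 d2) s i))"

lemma hW_Qr_int:
  assumes d1: "d1 > 0" and d2: "d2 > 0" and s: "s \<ge> 0"
  shows "has_bochner_integral lborel (\<lambda>w. hW L d1 d2 w * Qr n (s*w)) (Ghw L d1 d2 n s)"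
proof -
  have pos: "1 / dsel j d1 d2 > 0" for j using d1 d2 by (simp add: dsel_def)
  have "has_bochner_integral lborel (\<lambda>w. \<Sum>j\<in>{1::nat, 2}. \<Sum>k = 0..L - 1.
      acoef L (dsel j d1 d2) (dsel j d2 d1) k * (fact k * dsel j d1 d2 ^ (k + 1))
      * (erlang_density k (1 / dsel j d1 d2) w * Qr n (s*w))) (Ghw L d1 d2 n s)"
    unfolding Ghw_def
    by (intro has_bochner_integral_sum has_bochner_integral_mult_right erl_Qr_int pos s)
  then show ?thesis
    unfolding hW_def sum_distrib_right by (simp add: mult.assoc)
qed


lemma inv_sq_integrable: "integrable lborel (\<lambda>t::real. indicator {0..} t * (1 / (t+1)^2))"
proof (rule integrableI_nonneg)
  have "(\<integral>\<^sup>+t. ennreal (1 / (t+1)^2) * indicator {0..} t \<partial>lborel) = ennreal (0 - (- 1 / (0 + 1)))"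
  proof (rule nn_integral_FTC_atLeast[where F="\<lambda>t. - 1 / (t + 1)"])
    show "((\<lambda>t::real. - 1 / (t + 1)) \<longlongrightarrow> 0) at_top" by real_asymp
  qed (auto intro!: derivative_eq_intros simp: power2_eq_square)
  moreover have "(\<integral>\<^sup>+t. ennreal (indicator {0..} t * (1 / (t+1)^2)) \<partial>lborel) =
      (\<integral>\<^sup>+t. ennreal (1 / (t+1)^2) * indicator {0..} t \<partial>lborel)"
    by (intro nn_integral_cong) (auto split: split_indicator)
  ultimately show "(\<integral>\<^sup>+t. ennreal (indicator {0..} t * (1 / (t+1)^2)) \<partial>lborel) < \<infinity>"
    by simp
qed (auto split: split_indicator)

lemma psi_bound:
  fixes t \<beta> :: real
  assumes t: "t > 0" and b: "\<beta> > 0" and iK: "i < K"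
  shows "t^i / ((t+\<beta>)^K * (t+1)) \<le> ((1 + 1/\<beta>) / \<beta>^(K-i-1)) * (1 / (t+1)^2)"
proof -
  have tb: "t + \<beta> > 0" using t b by simp
  have h1: "t^i \<le> (t+\<beta>)^i" using t b by (intro power_mono) auto
  have "t^i / ((t+\<beta>)^K * (t+1)) \<le> (t+\<beta>)^i / ((t+\<beta>)^K * (t+1))"
    by (rule divide_right_mono[OF h1]) (use tb t in simp)
  also have eK: "K = i + ((K-i-1) + 1)" using iK by simp
  have "(t+\<beta>)^K = (t+\<beta>)^i * ((t+\<beta>)^(K-i-1) * (t+\<beta>))"
    by (subst eK) (simp only: power_add power_one_right)
  then have "(t+\<beta>)^i / ((t+\<beta>)^K * (t+1)) = (t+\<beta>)^i / ((t+\<beta>)^i * ((t+\<beta>)^(K-i-1) * ((t+\<beta>) * (t+1))))"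
    by (simp add: mult_ac)
  also have "\<dots> = 1 / ((t+\<beta>)^(K-i-1) * ((t+\<beta>) * (t+1)))"
    by (rule nonzero_divide_mult_cancel_left) (use tb in simp)
  also have "\<dots> \<le> 1 / (\<beta>^(K-i-1) * ((t+1)^2 / (1 + 1/\<beta>)))"
  proof (rule divide_left_mono)
    have a: "\<beta>^(K-i-1) \<le> (t+\<beta>)^(K-i-1)" using t b by (intro power_mono) auto
    have c: "(t+1)^2 / (1 + 1/\<beta>) \<le> (t+\<beta>) * (t+1)"
      using t b by (simp add: field_simps power2_eq_square)
    show "\<beta>^(K-i-1) * ((t+1)^2 / (1 + 1/\<beta>)) \<le> (t+\<beta>)^(K-i-1) * ((t+\<beta>) * (t+1))"
      by (rule mult_mono[OF a c]) (use t b tb in auto)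
    show "0 < (t+\<beta>)^(K-i-1) * ((t+\<beta>) * (t+1)) * (\<beta>^(K-i-1) * ((t+1)^2 / (1 + 1/\<beta>)))"
      using t b tb by (intro mult_pos_pos) (auto simp: add_pos_pos)
  qed simp
  also have "\<dots> = ((1 + 1/\<beta>) / \<beta>^(K-i-1)) * (1 / (t+1)^2)"
    using t b by (simp add: field_simps)
  finally show ?thesis .
qed

lemma psi_integrable:
  fixes \<beta> :: real
  assumes b: "\<beta> > 0" and iK: "i < K"
  shows "integrable lborel (\<lambda>t. indicator {0<..} t * (t^i / ((t+\<beta>)^K * (t+1))))"
proof (rule Bochner_Integration.integrable_bound)
  show "integrable lborel (\<lambda>t. ((1 + 1/\<beta>) / \<beta>^(K-i-1)) * (indicator {0..} t * (1 / (t+1)^2)))"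
    by (intro integrable_mult_right inv_sq_integrable)
  show "AE t in lborel. norm (indicator {0<..} t * (t^i / ((t+\<beta>)^K * (t+1)))) \<le>
          norm (((1 + 1/\<beta>) / \<beta>^(K-i-1)) * (indicator {0..} t * (1 / (t+1)^2)))"
  proof (rule AE_I2)
    fix t :: real
    show "norm (indicator {0<..} t * (t^i / ((t+\<beta>)^K * (t+1)))) \<le>
          norm (((1 + 1/\<beta>) / \<beta>^(K-i-1)) * (indicator {0..} t * (1 / (t+1)^2)))"
    proof (cases "t > 0")
      case True
      have "0 \<le> t^i / ((t+\<beta>)^K * (t+1))" using True b by simp
      then show ?thesis using True psi_bound[OF True b iK] b by simp
    next
      case False
      then show ?thesis using b by (simp add: indicator_def)
    qed
  qed
qed measurable


lemma psi_I2:
  assumes b: "\<beta> > 0" and iK: "i < K"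
  shows "has_bochner_integral lborel (\<lambda>t. indicator {0<..} t * (t^i / ((t+\<beta>)^K * (t+1)))) (I2 \<beta> i K)"
proof -
  have e: "I2 \<beta> i K = (\<integral>t. indicator {0<..} t * (t^i / ((t+\<beta>)^K * (t+1))) \<partial>lborel)"
    unfolding I2_def set_lebesgue_integral_def by simp
  show ?thesis unfolding e by (rule has_bochner_integral_integrable[OF psi_integrable[OF b iK]])
qed

lemma cQ_t:
  assumes d: "d > 0" and a: "\<alpha> > 0" and t: "t > 0"
  shows "(fact k * d^(k+1)) * cQ k (1/d) (t/\<alpha>) i = \<alpha>^(k+1) * fact (k+i) / fact i * (t^i / (t + \<alpha>/d)^(k+i+1))"
proof -
  define u where "u = t + \<alpha>/d"
  have u: "u > 0" using d a t unfolding u_def by (auto intro!: add_pos_pos divide_pos_pos)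
  have e: "1/d + t/\<alpha> = u / \<alpha>" using a d unfolding u_def by (simp add: field_simps)
  have e2: "\<alpha>^(k+i+1) = \<alpha>^i * \<alpha>^(k+1)" by (simp add: power_add[symmetric] add.commute add.left_commute)
  show ?thesis unfolding cQ_def e u_def[symmetric] power_divide e2
    using u a d by (simp add: field_simps power_add)
qed

lemma sum_swap3: "(\<Sum>j\<in>J. \<Sum>k\<in>K. \<Sum>i\<in>I. F i j k) = (\<Sum>i\<in>I. \<Sum>j\<in>J. \<Sum>k\<in>K. F i j k)"
proof -
  have "(\<Sum>j\<in>J. \<Sum>k\<in>K. \<Sum>i\<in>I. F i j k) = (\<Sum>j\<in>J. \<Sum>i\<in>I. \<Sum>k\<in>K. F i j k)"
    by (rule sum.cong[OF refl], rule sum.swap)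
  also have "\<dots> = (\<Sum>i\<in>I. \<Sum>j\<in>J. \<Sum>k\<in>K. F i j k)" by (rule sum.swap)
  finally show ?thesis .
qed

definition RHSv :: "nat \<Rightarrow> real \<Rightarrow> real \<Rightarrow> nat \<Rightarrow> real \<Rightarrow> real" where
  "RHSv L d1 d2 n \<alpha> = (\<Sum>i = 0..n. \<Sum>j\<in>{1::nat, 2}. \<Sum>k = 0..L - 1.
         acoef L (dsel j d1 d2) (dsel j d2 d1) k * \<alpha> ^ (k + 1) * fact (k + i) / fact i
         * I2 (\<alpha> / dsel j d1 d2) i (k + i + 1))"

lemma phi_pointwise:
  assumes d1: "d1 > 0" and d2: "d2 > 0" and a: "\<alpha> > 0"
  shows "indicator {0<..} t * (1/(1+t)) * Ghw L d1 d2 n (t/\<alpha>) =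
    (\<Sum>i = 0..n. \<Sum>j\<in>{1::nat, 2}. \<Sum>k = 0..L - 1.
         (acoef L (dsel j d1 d2) (dsel j d2 d1) k * \<alpha> ^ (k + 1) * fact (k + i) / fact i)
         * (indicator {0<..} t * (t^i / ((t + \<alpha> / dsel j d1 d2)^(k+i+1) * (t+1)))))"
proof (cases "t > 0")
  case False then show ?thesis by simp
next
  case True
  have dp: "dsel j d1 d2 > 0" for j using d1 d2 by (simp add: dsel_def)
  have "indicator {0<..} t * (1/(1+t)) * Ghw L d1 d2 n (t/\<alpha>) =
    (\<Sum>j\<in>{1::nat, 2}. \<Sum>k = 0..L - 1. \<Sum>i = 0..n.
         (acoef L (dsel j d1 d2) (dsel j d2 d1) k * \<alpha> ^ (k + 1) * fact (k + i) / fact i)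
         * (indicator {0<..} t * (t^i / ((t + \<alpha> / dsel j d1 d2)^(k+i+1) * (t+1)))))"
    unfolding Ghw_def sum_distrib_left atLeast0AtMost[symmetric]
  proof (intro sum.cong refl)
    fix j k i
    have c: "(fact k * dsel j d1 d2 ^ (k+1)) * cQ k (1 / dsel j d1 d2) (t/\<alpha>) i =
      \<alpha>^(k+1) * fact (k+i) / fact i * (t^i / (t + \<alpha> / dsel j d1 d2)^(k+i+1))"
      by (rule cQ_t[OF dp a True])
    have "t + \<alpha> / dsel j d1 d2 > 0" using True a dp[of j] by (auto intro!: add_pos_pos divide_pos_pos)
    then have pos: "(t + \<alpha> / dsel j d1 d2)^(k+i+1) > 0" by (rule zero_less_power)
    show "indicator {0<..} t * (1/(1+t)) * (acoef L (dsel j d1 d2) (dsel j d2 d1) k * (fact k * dsel j d1 d2 ^ (k + 1)) *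
        cQ k (1 / dsel j d1 d2) (t / \<alpha>) i) =
      (acoef L (dsel j d1 d2) (dsel j d2 d1) k * \<alpha> ^ (k + 1) * fact (k + i) / fact i)
         * (indicator {0<..} t * (t^i / ((t + \<alpha> / dsel j d1 d2)^(k+i+1) * (t+1))))"
      using True pos unfolding mult.assoc[of "acoef _ _ _ _"] c by (simp add: field_simps)
  qed
  also have "\<dots> = (\<Sum>i = 0..n. \<Sum>j\<in>{1::nat, 2}. \<Sum>k = 0..L - 1.
         (acoef L (dsel j d1 d2) (dsel j d2 d1) k * \<alpha> ^ (k + 1) * fact (k + i) / fact i)
         * (indicator {0<..} t * (t^i / ((t + \<alpha> / dsel j d1 d2)^(k+i+1) * (t+1)))))"
    by (rule sum_swap3)
  finally show ?thesis .
qed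

lemma phi_int:
  assumes d1: "d1 > 0" and d2: "d2 > 0" and a: "\<alpha> > 0"
  shows "has_bochner_integral lborel (\<lambda>t. indicator {0<..} t * (1/(1+t)) * Ghw L d1 d2 n (t/\<alpha>)) (RHSv L d1 d2 n \<alpha>)"
proof -
  have dp: "\<alpha> / dsel j d1 d2 > 0" for j using d1 d2 a by (simp add: dsel_def)
  have "has_bochner_integral lborel (\<lambda>t. \<Sum>i = 0..n. \<Sum>j\<in>{1::nat, 2}. \<Sum>k = 0..L - 1.
         (acoef L (dsel j d1 d2) (dsel j d2 d1) k * \<alpha> ^ (k + 1) * fact (k + i) / fact i)
         * (indicator {0<..} t * (t^i / ((t + \<alpha> / dsel j d1 d2)^(k+i+1) * (t+1))))) (RHSv L d1 d2 n \<alpha>)"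
    unfolding RHSv_def
    by (intro has_bochner_integral_sum has_bochner_integral_mult_right psi_I2 dp) simp
  then show ?thesis by (simp only: phi_pointwise[OF d1 d2 a])
qed


lemma J_formula:
  fixes w \<alpha> :: real
  assumes w: "w > 0" and a: "\<alpha> > 0"
  shows "(\<integral>\<^sup>+x. ennreal (erlang_density n 1 x) * ennreal (ln (1 + \<alpha> * x / w)) \<partial>lborel) =
         (\<integral>\<^sup>+t. ennreal (indicator {0<..} t * (1/(1+t)) * Qr n (t*w/\<alpha>)) \<partial>lborel)"
proof -
  define G where "G = (\<lambda>(x::real, t::real). ennreal (erlang_density n 1 x) * ennreal (1/(1+t)) * indicator {0<..} t *
       (if t*w/\<alpha> \<le> x then 1 else 0 :: ennreal))"
  have Gm[measurable]: "G \<in> borel_measurable (lborel \<Otimes>\<^sub>M lborel)"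
    unfolding G_def by measurable
  have inner: "ennreal (erlang_density n 1 x) * ennreal (ln (1 + \<alpha> * x / w)) = (\<integral>\<^sup>+t. G (x, t) \<partial>lborel)" for x
  proof (cases "x < 0")
    case True
    then show ?thesis unfolding G_def erlang_density_def by simp
  next
    case False
    then have v: "\<alpha> * x / w \<ge> 0" using a w by simp
    have "ennreal (erlang_density n 1 x) * ennreal (ln (1 + \<alpha> * x / w)) =
      ennreal (erlang_density n 1 x) * (\<integral>\<^sup>+t. ennreal (1 / (1 + t)) * indicator {0..\<alpha> * x / w} t \<partial>lborel)"
      by (simp add: ln_layer[OF v])
    also have "\<dots> = (\<integral>\<^sup>+t. ennreal (erlang_density n 1 x) * (ennreal (1 / (1 + t)) * indicator {0..\<alpha> * x / w} t) \<partial>lborel)"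
      by (rule nn_integral_cmult[symmetric]) measurable
    also have "\<dots> = (\<integral>\<^sup>+t. G (x, t) \<partial>lborel)"
    proof (rule nn_integral_cong_AE)
      show "AE t in lborel. ennreal (erlang_density n 1 x) * (ennreal (1 / (1 + t)) * indicator {0..\<alpha> * x / w} t) = G (x, t)"
        using AE_lborel_singleton[of 0]
      proof eventually_elim
        case (elim t)
        have "t \<in> {0..\<alpha> * x / w} \<longleftrightarrow> 0 < t \<and> t*w/\<alpha> \<le> x" using elim a w
          by (auto simp: field_simps)
        then show ?case unfolding G_def by (auto simp: indicator_def mult_ac)
      qed
    qed
    finally show ?thesis .
  qed
  have "(\<integral>\<^sup>+x. ennreal (erlang_density n 1 x) * ennreal (ln (1 + \<alpha> * x / w)) \<partial>lborel) =
      (\<integral>\<^sup>+x. \<integral>\<^sup>+t. G (x, t) \<partial>lborel \<partial>lborel)"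
    by (simp add: inner)
  also have "\<dots> = (\<integral>\<^sup>+t. \<integral>\<^sup>+x. G (x, t) \<partial>lborel \<partial>lborel)"
    by (rule lborel_pair.Fubini'[symmetric]) (simp add: Gm)
  also have "\<dots> = (\<integral>\<^sup>+t. ennreal (indicator {0<..} t * (1/(1+t)) * Qr n (t*w/\<alpha>)) \<partial>lborel)"
  proof (rule nn_integral_cong)
    fix t :: real
    show "(\<integral>\<^sup>+x. G (x, t) \<partial>lborel) = ennreal (indicator {0<..} t * (1/(1+t)) * Qr n (t*w/\<alpha>))"
    proof (cases "t > 0")
      case False
      then show ?thesis unfolding G_def by simp
    next
      case True
      have s: "t*w/\<alpha> \<ge> 0" using True w a by simp
      have "(\<integral>\<^sup>+x. G (x, t) \<partial>lborel) =
          (\<integral>\<^sup>+x. ennreal (1/(1+t)) * (ennreal (erlang_density n 1 x) * indicator {t*w/\<alpha>..} x) \<partial>lborel)"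
        unfolding G_def using True by (intro nn_integral_cong) (auto simp: indicator_def mult_ac)
      also have "\<dots> = ennreal (1/(1+t)) * (\<integral>\<^sup>+x. ennreal (erlang_density n 1 x) * indicator {t*w/\<alpha>..} x \<partial>lborel)"
        by (rule nn_integral_cmult) measurable
      also have "\<dots> = ennreal (1/(1+t)) * ennreal (Qr n (t*w/\<alpha>))"
        by (simp add: tail_erlang[OF s])
      also have "\<dots> = ennreal (indicator {0<..} t * (1/(1+t)) * Qr n (t*w/\<alpha>))"
        using True Qr_nonneg[OF s] by (simp add: ennreal_mult[symmetric])
      finally show ?thesis .
    qed
  qed
  finally show ?thesis .
qed


lemma hQ_nonneg_AE:
  assumes hp: "\<And>w. w > 0 \<Longrightarrow> hW L d1 d2 w \<ge> 0" and s: "s \<ge> 0"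
  shows "AE w in lborel. 0 \<le> hW L d1 d2 w * Qr n (s*w)"
  using AE_lborel_singleton[of 0]
proof eventually_elim
  case (elim w)
  show ?case
  proof (cases "w > 0")
    case True then show ?thesis using hp[OF True] Qr_nonneg[of "s*w" n] s by simp
  next
    case False then have "w < 0" using elim by simp
    then show ?thesis by (simp add: hW_neg)
  qed
qed

lemma Ghw_nonneg:
  assumes d1: "d1 > 0" and d2: "d2 > 0" and hp: "\<And>w. w > 0 \<Longrightarrow> hW L d1 d2 w \<ge> 0" and s: "s \<ge> 0"
  shows "Ghw L d1 d2 n s \<ge> 0"
proof -
  have "Ghw L d1 d2 n s = (\<integral>w. hW L d1 d2 w * Qr n (s*w) \<partial>lborel)"
    using hW_Qr_int[OF d1 d2 s, where L=L and n=n] by (simp add: has_bochner_integral_integral_eq)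
  also have "\<dots> \<ge> 0" by (rule integral_nonneg_AE[OF hQ_nonneg_AE[OF hp s]])
  finally show ?thesis .
qed

lemma E_formula:
  fixes d1 d2 \<alpha> :: real
  assumes d1: "d1 > 0" and d2: "d2 > 0" and a: "\<alpha> > 0"
    and hp: "\<And>w. w > 0 \<Longrightarrow> hW L d1 d2 w \<ge> 0"
  shows "(\<integral>\<^sup>+w. \<integral>\<^sup>+x. ennreal (erlang_density n 1 x) * ennreal (hW L d1 d2 w) * ennreal (ln (1 + \<alpha> * x / w)) \<partial>lborel \<partial>lborel)
           = ennreal (RHSv L d1 d2 n \<alpha>)"
    and "RHSv L d1 d2 n \<alpha> \<ge> 0"
proof -
  let ?h = "hW L d1 d2"
  define \<psi> where "\<psi> = (\<lambda>(w::real, t::real). ennreal (?h w * (indicator {0<..} t * (1/(1+t)) * Qr n (t*w/\<alpha>))))"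
  have \<psi>m[measurable]: "\<psi> \<in> borel_measurable (lborel \<Otimes>\<^sub>M lborel)" unfolding \<psi>_def by measurable
  define \<phi> where "\<phi> t = indicator {0<..} t * (1/(1+t)) * Ghw L d1 d2 n (t/\<alpha>)" for t
  have \<phi>nn: "0 \<le> \<phi> t" for t
  proof (cases "t > 0")
    case True
    have "Ghw L d1 d2 n (t/\<alpha>) \<ge> 0" by (rule Ghw_nonneg[OF d1 d2 hp]) (use True a in \<open>auto intro!: divide_nonneg_pos\<close>)
    then show ?thesis using True unfolding \<phi>_def by simp
  qed (simp add: \<phi>_def)
  have \<phi>int: "has_bochner_integral lborel \<phi> (RHSv L d1 d2 n \<alpha>)"
    unfolding \<phi>_def by (rule phi_int[OF d1 d2 a])
  have S1: "AE w in lborel. (\<integral>\<^sup>+x. ennreal (erlang_density n 1 x) * ennreal (?h w) * ennreal (ln (1 + \<alpha> * x / w)) \<partial>lborel)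
        = (\<integral>\<^sup>+t. \<psi> (w, t) \<partial>lborel)"
    using AE_lborel_singleton[of 0]
  proof eventually_elim
    case (elim w)
    show ?case
    proof (cases "w > 0")
      case False then have "w < 0" using elim by simp
      then show ?thesis unfolding \<psi>_def by (simp add: hW_neg)
    next
      case True
      have "(\<integral>\<^sup>+x. ennreal (erlang_density n 1 x) * ennreal (?h w) * ennreal (ln (1 + \<alpha> * x / w)) \<partial>lborel)
          = (\<integral>\<^sup>+x. ennreal (?h w) * (ennreal (erlang_density n 1 x) * ennreal (ln (1 + \<alpha> * x / w))) \<partial>lborel)"
        by (simp add: mult_ac)
      also have "\<dots> = ennreal (?h w) * (\<integral>\<^sup>+x. ennreal (erlang_density n 1 x) * ennreal (ln (1 + \<alpha> * x / w)) \<partial>lborel)"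
        by (rule nn_integral_cmult) measurable
      also have "\<dots> = ennreal (?h w) * (\<integral>\<^sup>+t. ennreal (indicator {0<..} t * (1/(1+t)) * Qr n (t*w/\<alpha>)) \<partial>lborel)"
        by (simp add: J_formula[OF True a])
      also have "\<dots> = (\<integral>\<^sup>+t. ennreal (?h w) * ennreal (indicator {0<..} t * (1/(1+t)) * Qr n (t*w/\<alpha>)) \<partial>lborel)"
        by (rule nn_integral_cmult[symmetric]) measurable
      also have "\<dots> = (\<integral>\<^sup>+t. \<psi> (w, t) \<partial>lborel)"
        unfolding \<psi>_def prod.case by (intro nn_integral_cong) (rule ennreal_mult'[symmetric, OF hp[OF True]])
      finally show ?thesis .
    qed
  qed
  have "(\<integral>\<^sup>+w. \<integral>\<^sup>+x. ennreal (erlang_density n 1 x) * ennreal (?h w) * ennreal (ln (1 + \<alpha> * x / w)) \<partial>lborel \<partial>lborel)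
      = (\<integral>\<^sup>+w. \<integral>\<^sup>+t. \<psi> (w, t) \<partial>lborel \<partial>lborel)"
    by (rule nn_integral_cong_AE[OF S1])
  also have "\<dots> = (\<integral>\<^sup>+t. \<integral>\<^sup>+w. \<psi> (w, t) \<partial>lborel \<partial>lborel)"
    by (rule lborel_pair.Fubini'[symmetric]) (simp add: \<psi>m)
  also have "\<dots> = (\<integral>\<^sup>+t. ennreal (\<phi> t) \<partial>lborel)"
  proof (rule nn_integral_cong)
    fix t :: real
    show "(\<integral>\<^sup>+w. \<psi> (w, t) \<partial>lborel) = ennreal (\<phi> t)"
    proof (cases "t > 0")
      case False then show ?thesis unfolding \<psi>_def \<phi>_def by simp
    next
      case True
      have s: "t/\<alpha> \<ge> 0" using True a by (auto intro!: divide_nonneg_pos)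
      have hb: "has_bochner_integral lborel (\<lambda>w. (1/(1+t)) * (?h w * Qr n ((t/\<alpha>)*w))) ((1/(1+t)) * Ghw L d1 d2 n (t/\<alpha>))"
        by (intro has_bochner_integral_mult_right hW_Qr_int[OF d1 d2 s])
      have eqf: "\<psi> (w, t) = ennreal ((1/(1+t)) * (?h w * Qr n ((t/\<alpha>)*w)))" for w
        unfolding \<psi>_def using True by (simp add: mult_ac)
      have "(\<integral>\<^sup>+w. \<psi> (w, t) \<partial>lborel) = (\<integral>\<^sup>+w. ennreal ((1/(1+t)) * (?h w * Qr n ((t/\<alpha>)*w))) \<partial>lborel)"
        by (simp add: eqf)
      also have "\<dots> = ennreal (\<integral>w. (1/(1+t)) * (?h w * Qr n ((t/\<alpha>)*w)) \<partial>lborel)"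
      proof (rule nn_integral_eq_integral)
        show "integrable lborel (\<lambda>w. (1/(1+t)) * (?h w * Qr n ((t/\<alpha>)*w)))"
          using hb by (rule integrable.intros)
        show "AE w in lborel. 0 \<le> (1/(1+t)) * (?h w * Qr n ((t/\<alpha>)*w))"
          by (rule eventually_mono[OF hQ_nonneg_AE[OF hp s, of n]]) (use True in \<open>auto intro!: mult_nonneg_nonneg\<close>)
      qed
      also have "\<dots> = ennreal (\<phi> t)"
        unfolding has_bochner_integral_integral_eq[OF hb] using True unfolding \<phi>_def by simp
      finally show ?thesis .
    qed
  qed
  also have "\<dots> = ennreal (\<integral>t. \<phi> t \<partial>lborel)"
    by (rule nn_integral_eq_integral) (use \<phi>int integrable.intros \<phi>nn in auto)
  also have "(\<integral>t. \<phi> t \<partial>lborel) = RHSv L d1 d2 n \<alpha>"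
    using \<phi>int by (simp add: has_bochner_integral_integral_eq)
  finally show "(\<integral>\<^sup>+w. \<integral>\<^sup>+x. ennreal (erlang_density n 1 x) * ennreal (?h w) * ennreal (ln (1 + \<alpha> * x / w)) \<partial>lborel \<partial>lborel)
           = ennreal (RHSv L d1 d2 n \<alpha>)" .
  have "RHSv L d1 d2 n \<alpha> = (\<integral>t. \<phi> t \<partial>lborel)"
    using \<phi>int by (simp add: has_bochner_integral_integral_eq)
  also have "\<dots> \<ge> 0" by (rule Bochner_Integration.integral_nonneg) (simp add: \<phi>nn)
  finally show "RHSv L d1 d2 n \<alpha> \<ge> 0" .
qed


lemma indep_var_lborel:
  fixes X Y :: "'a \<Rightarrow> real"
  assumes "prob_space M" and "prob_space.indep_var M borel X borel Y"
  shows "prob_space.indep_var M lborel X lborel Y"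
proof -
  interpret P: prob_space M by fact
  have e1: "case_bool lborel lborel = (\<lambda>_::bool. lborel :: real measure)" by (rule ext) (simp split: bool.split)
  have e2: "case_bool borel borel = (\<lambda>_::bool. borel :: real measure)" by (rule ext) (simp split: bool.split)
  show ?thesis using assms(2) unfolding P.indep_var_def e1 e2 P.indep_vars_def2 by simp
qed

theorem mainTheorem2:
  fixes M :: "'a measure" and z y1 y2 :: "'a \<Rightarrow> real"
    and N L :: nat and \<alpha> \<delta>1 \<delta>2 :: real
  assumes "prob_space M"
    and "1 \<le> L" and "L \<le> N - 1"
    and "\<alpha> > 0" and "\<delta>1 > 0" and "\<delta>2 > 0" and "\<delta>1 \<noteq> \<delta>2"
    and "prob_space.indep_vars M (\<lambda>_. borel)
           (\<lambda>i. if i = (0::nat) then z else if i = 1 then y1 else y2) {0, 1, 2}"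
    and "distributed M lborel z (erlang_density (N - L - 1) 1)"
    and "distributed M lborel y1 (erlang_density (L - 1) 1)"
    and "distributed M lborel y2 (erlang_density (L - 1) 1)"
  shows "integrable M (\<lambda>\<omega>. ln (1 + \<alpha> * z \<omega> / (\<delta>1 * y1 \<omega> + \<delta>2 * y2 \<omega>)))
    \<and> (\<integral>\<omega>. ln (1 + \<alpha> * z \<omega> / (\<delta>1 * y1 \<omega> + \<delta>2 * y2 \<omega>)) \<partial>M) =
      (\<Sum>i = 0..N - L - 1. \<Sum>j\<in>{1, 2}. \<Sum>k = 0..L - 1.
         acoef L (dsel j \<delta>1 \<delta>2) (dsel j \<delta>2 \<delta>1) k * \<alpha> ^ (k + 1) * fact (k + i) / fact i
         * I2 (\<alpha> / dsel j \<delta>1 \<delta>2) i (k + i + 1))"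
proof -
  interpret P: prob_space M by (rule assms(1))
  have d1: "\<delta>1 > 0" and d2: "\<delta>2 > 0" and d12: "\<delta>1 \<noteq> \<delta>2" and a: "\<alpha> > 0" using assms by auto
  obtain m where Lm: "L = Suc m" using assms(2) by (cases L) auto
  define n where "n = N - L - 1"
  define W where "W = (\<lambda>\<omega>. \<delta>1 * y1 \<omega> + \<delta>2 * y2 \<omega>)"
  define X' where "X' = (\<lambda>i::nat. if i = 0 then z else if i = 1 then (\<lambda>\<omega>. \<delta>1 * y1 \<omega>) else (\<lambda>\<omega>. \<delta>2 * y2 \<omega>))"
  have ind0: "P.indep_vars (\<lambda>_. borel) (\<lambda>i \<omega>. (\<lambda>i x. if i = (0::nat) then x else if i = 1 then \<delta>1 * x else \<delta>2 * x) i
       ((\<lambda>i. if i = (0::nat) then z else if i = 1 then y1 else y2) i \<omega>)) {0,1,2}"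
    by (rule P.indep_vars_compose2[OF assms(8)]) auto
  have ind3: "P.indep_vars (\<lambda>_. borel) X' {0,1,2}"
  proof -
    have "P.indep_vars (\<lambda>_. borel) X' {0,1,2} \<longleftrightarrow> P.indep_vars (\<lambda>_. borel) (\<lambda>i \<omega>. (\<lambda>i x. if i = (0::nat) then x else if i = 1 then \<delta>1 * x else \<delta>2 * x) i
       ((\<lambda>i. if i = (0::nat) then z else if i = 1 then y1 else y2) i \<omega>)) {0,1,2}"
      by (intro P.indep_vars_cong) (auto simp: X'_def fun_eq_iff)
    then show ?thesis using ind0 by simp
  qed
  have zW: "P.indep_var borel z borel W"
    using P.indep_vars_sum[of "{1,2}" 0 X'] ind3 by (simp add: X'_def W_def)
  have Y12: "P.indep_var borel (\<lambda>\<omega>. \<delta>1 * y1 \<omega>) borel (\<lambda>\<omega>. \<delta>2 * y2 \<omega>)"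
    using P.indep_vars_sum[of "{2}" 1 X'] P.indep_vars_subset[OF ind3, of "{1,2}"] by (simp add: X'_def)
  have Dy1: "distributed M lborel (\<lambda>\<omega>. \<delta>1 * y1 \<omega>) (erlang_density m (1/\<delta>1))"
    using P.erlang_distributed_mult_const[OF assms(10) d1] Lm by simp
  have Dy2: "distributed M lborel (\<lambda>\<omega>. \<delta>2 * y2 \<omega>) (erlang_density m (1/\<delta>2))"
    using P.erlang_distributed_mult_const[OF assms(11) d2] Lm by simp
  have conv: "distributed M lborel W (\<lambda>x. \<integral>\<^sup>+y. ennreal (erlang_density m (1/\<delta>1) (x - y)) * ennreal (erlang_density m (1/\<delta>2) y) \<partial>lborel)"
    unfolding W_def by (rule P.distributed_convolution[OF Y12 Dy1 Dy2])
  have DW: "distributed M lborel W (\<lambda>x. ennreal (hW L \<delta>1 \<delta>2 x))"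
  proof -
    have "AE x in lborel. (\<integral>\<^sup>+y. ennreal (erlang_density m (1/\<delta>1) (x - y)) * ennreal (erlang_density m (1/\<delta>2) y) \<partial>lborel)
        = ennreal (hW L \<delta>1 \<delta>2 x)"
      using AE_lborel_singleton[of 0]
    proof eventually_elim
      case (elim x)
      show ?case
      proof (cases "x > 0")
        case True then show ?thesis unfolding Lm by (rule conv_density(1)[OF d1 d2 d12])
      next
        case False then have x: "x < 0" using elim by simp
        have z0: "ennreal (erlang_density m (1/\<delta>1) (x - y)) * ennreal (erlang_density m (1/\<delta>2) y) = 0" for y
        proof -
          have "y < 0 \<or> x - y < 0" using x by auto
          then show ?thesis unfolding erlang_density_def by auto
        qed
        show ?thesis using hW_neg[OF x] by (simp add: z0)
      qed
    qed
    moreover have "(\<lambda>x. \<integral>\<^sup>+y. ennreal (erlang_density m (1/\<delta>1) (x - y)) * ennreal (erlang_density m (1/\<delta>2) y) \<partial>lborel) \<in> borel_measurable lborel"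
      using distributed_borel_measurable[OF conv] by simp
    ultimately show ?thesis using conv
      by (subst (asm) distributed_cong_density) auto
  qed
  have hp: "\<And>w. w > 0 \<Longrightarrow> hW L \<delta>1 \<delta>2 w \<ge> 0"
    unfolding Lm by (rule conv_density(2)[OF d1 d2 d12])
  have indl: "P.indep_var lborel z lborel W"
    by (rule indep_var_lborel[OF assms(1) zW])
  have Dz: "distributed M lborel z (erlang_density n 1)"
    using assms(9) unfolding n_def .
  have joint: "distributed M (lborel \<Otimes>\<^sub>M lborel) (\<lambda>\<omega>. (z \<omega>, W \<omega>))
      (\<lambda>(x, y). ennreal (erlang_density n 1 x) * ennreal (hW L \<delta>1 \<delta>2 y))"
    by (rule P.distributed_joint_indep[OF sigma_finite_lborel sigma_finite_lborel Dz DW indl])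
  have zm[measurable]: "z \<in> borel_measurable M" using distributed_measurable[OF Dz] by simp
  have y1m[measurable]: "y1 \<in> borel_measurable M" using distributed_measurable[OF assms(10)] by simp
  have y2m[measurable]: "y2 \<in> borel_measurable M" using distributed_measurable[OF assms(11)] by simp
  have E: "(\<integral>\<^sup>+\<omega>. ennreal (ln (1 + \<alpha> * z \<omega> / (\<delta>1 * y1 \<omega> + \<delta>2 * y2 \<omega>))) \<partial>M) = ennreal (RHSv L \<delta>1 \<delta>2 n \<alpha>)"
  proof -
    have "(\<integral>\<^sup>+\<omega>. ennreal (ln (1 + \<alpha> * z \<omega> / (\<delta>1 * y1 \<omega> + \<delta>2 * y2 \<omega>))) \<partial>M) =
       (\<integral>\<^sup>+p. (\<lambda>(x, y). ennreal (erlang_density n 1 x) * ennreal (hW L \<delta>1 \<delta>2 y)) p * ennreal (ln (1 + \<alpha> * fst p / snd p)) \<partial>(lborel \<Otimes>\<^sub>M lborel))"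
      using distributed_nn_integral[OF joint, of "\<lambda>p. ennreal (ln (1 + \<alpha> * fst p / snd p))"] by (simp add: W_def)
    also have "\<dots> = (\<integral>\<^sup>+w. \<integral>\<^sup>+x. ennreal (erlang_density n 1 x) * ennreal (hW L \<delta>1 \<delta>2 w) * ennreal (ln (1 + \<alpha> * x / w)) \<partial>lborel \<partial>lborel)"
      by (subst lborel_pair.nn_integral_snd[symmetric]) auto
    also have "\<dots> = ennreal (RHSv L \<delta>1 \<delta>2 n \<alpha>)"
      by (rule E_formula(1)[OF d1 d2 a hp])
    finally show ?thesis .
  qed
  have nnAE: "AE \<omega> in M. 0 \<le> ln (1 + \<alpha> * z \<omega> / (\<delta>1 * y1 \<omega> + \<delta>2 * y2 \<omega>))"
  proof -
    have "AE \<omega> in M. 0 \<le> z \<omega>"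
      by (subst P.distributed_AE2[OF Dz]) (auto simp: erlang_density_def intro!: AE_I2)
    moreover have "AE \<omega> in M. 0 \<le> \<delta>1 * y1 \<omega>"
      by (subst P.distributed_AE2[OF Dy1]) (auto simp: erlang_density_def intro!: AE_I2)
    moreover have "AE \<omega> in M. 0 \<le> \<delta>2 * y2 \<omega>"
      by (subst P.distributed_AE2[OF Dy2]) (auto simp: erlang_density_def intro!: AE_I2)
    ultimately show ?thesis
    proof eventually_elim
      case (elim \<omega>)
      then have "0 \<le> \<alpha> * z \<omega> / (\<delta>1 * y1 \<omega> + \<delta>2 * y2 \<omega>)" using a by simp
      then show ?case by simp
    qed
  qed
  have RHSnn: "RHSv L \<delta>1 \<delta>2 n \<alpha> \<ge> 0" by (rule E_formula(2)[OF d1 d2 a hp])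
  have int: "integrable M (\<lambda>\<omega>. ln (1 + \<alpha> * z \<omega> / (\<delta>1 * y1 \<omega> + \<delta>2 * y2 \<omega>)))"
    by (rule integrableI_nonneg) (use nnAE E in auto)
  have "(\<integral>\<omega>. ln (1 + \<alpha> * z \<omega> / (\<delta>1 * y1 \<omega> + \<delta>2 * y2 \<omega>)) \<partial>M) = enn2real (ennreal (RHSv L \<delta>1 \<delta>2 n \<alpha>))"
    by (subst integral_eq_nn_integral) (use nnAE E in auto)
  also have "\<dots> = RHSv L \<delta>1 \<delta>2 n \<alpha>" using RHSnn by simp
  finally show ?thesis using int unfolding RHSv_def n_def by simp
qed


end
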